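(* Let $f : \widehat{\mathbb{Z}} \to \widehat{\mathbb{Z}}$ be congruence preserving and $s \in \widehat{\mathbb{Z}}$. Then $\lambda_f$ is a period map of $f{\Uparrow}_s$.
   Context: $\mathbb{N} = \{1,2,\dots\}$, $\widehat{\mathbb{Z}} = \varprojlim_n \mathbb{Z}/n\mathbb{Z}$; $s \equiv_n t$ means $s-t\in n\widehat{\mathbb{Z}}$; $\widehat{\cdot}:\mathbb{N}\to\widehat{\mathbb{Z}}$ is the natural embedding. For continuous $g:\widehat{\mathbb{Z}}\to\widehat{\mathbb{Z}}$, a map $P:\mathbb{N}\to\mathbb{N}$ is a period map of $g$ if $s \equiv_{P(n)} t$ implies $g(s)\equiv_n g(t)$ for all $s,t,n$. A continuous $f$ is congruence preserving if the identity of $\mathbb{N}$ is a period map of $f$; then $f$ induces self-maps $f_n:\mathbb{Z}/n\mathbb{Z}\to\mathbb{Z}/n\mathbb{Z}$, and $\lambda_f(n)$ denotes the period of $f_n$, i.e. the least common multiple over $y \in \mathbb{Z}/n\mathbb{Z}$ of the cycle length of $y$ (the least $l \ge 1$ with $f_n^k(y) = f_n^{k+l}(y)$ for some $k \ge 0$). For such $f$ and $x \in \widehat{\mathbb{Z}}$, $f{\Uparrow}_x:\widehat{\mathbb{Z}}\to\widehat{\mathbb{Z}}$ is defined by $f{\Uparrow}_x(s) = \lim_{i\to\infty} f^{n_i}(x)$ for any sequence of positive integers $n_i \to +\infty$ in $\mathbb{R}$ with $\widehat{n_i}\to s$ in $\widehat{\mathbb{Z}}$ (this limit exists and is independent of the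 sequence for congruence preserving $f$). *)

theory Defs
  imports Complex_Main
begin

text \<open>An element of the profinite completion of the integers is a compatible family
  of residues: its component at n > 0 lies in {0..<n} (a representative of Z/nZ), and
  components at m dvd n are compatible. The component at 0 is unused and fixed to 0.\<close>

typedef zhat = "{x :: nat \<Rightarrow> int. x 0 = 0 \<and> (\<forall>n>0. 0 \<le> x n \<and> x n < int n)
                 \<and> (\<forall>m n. 0 < m \<longrightarrow> 0 < n \<longrightarrow> m dvd n \<longrightarrow> x n mod int m = x m)}"
  by (rule exI[of _ "\<lambda>_. 0"]) simp

definition zres :: "nat \<Rightarrow> zhat \<Rightarrow> int" where
  "zres n s = Rep_zhat s n"

definition zsub :: "zhat \<Rightarrow> zhat \<Rightarrow> zhat" where
  "zsub s t = Abs_zhat (\<lambda>k. if k = 0 then 0 else (Rep_zhat s k - Rep_zhat t k) mod int k)"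

definition zmul :: "zhat \<Rightarrow> zhat \<Rightarrow> zhat" where
  "zmul s t = Abs_zhat (\<lambda>k. if k = 0 then 0 else (Rep_zhat s k * Rep_zhat t k) mod int k)"

definition zemb :: "nat \<Rightarrow> zhat" where
  "zemb a = Abs_zhat (\<lambda>k. if k = 0 then 0 else int a mod int k)"

definition zcong :: "nat \<Rightarrow> zhat \<Rightarrow> zhat \<Rightarrow> bool" where
  "zcong n s t \<longleftrightarrow> (\<exists>u. zsub s t = zmul (zemb n) u)"

instantiation zhat :: topological_space
begin

definition open_zhat :: "zhat set \<Rightarrow> bool" where
  "open_zhat U \<longleftrightarrow> (\<forall>x\<in>U. \<exists>n>0. \<forall>y. zres n y = zres n x \<longrightarrow> y \<in> U)"

lemma zres_compat:
  assumes "0 < m" "0 < n" "m dvd n" "zres n y = zres n x"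
  shows "zres m y = zres m x"
proof -
  have "\<And>z. zres n z mod int m = zres m z"
    using Rep_zhat assms(1-3) unfolding zres_def by blast
  then show ?thesis using assms(4) by metis
qed

instance
proof
  show "open (UNIV :: zhat set)" unfolding open_zhat_def
    by (intro ballI exI[of _ "1::nat"]) simp
next
  fix S T :: "zhat set"
  assume S: "open S" and T: "open T"
  show "open (S \<inter> T)" unfolding open_zhat_def
  proof
    fix x assume x: "x \<in> S \<inter> T"
    obtain a where a: "a > 0" "\<And>y. zres a y = zres a x \<Longrightarrow> y \<in> S"
      using S x unfolding open_zhat_def by blast
    obtain b where b: "b > 0" "\<And>y. zres b y = zres b x \<Longrightarrow> y \<in> T"
      using T x unfolding open_zhat_def by blast
    have ab: "a * b > 0" using a b by simp
    have "y \<in> S \<inter> T" if "zres (a*b) y = zres (a*b) x" for y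
    proof -
      have "zres a y = zres a x"
        by (rule zres_compat[OF a(1) ab _ that]) simp
      moreover have "zres b y = zres b x"
        by (rule zres_compat[OF b(1) ab _ that]) simp
      ultimately show ?thesis using a(2) b(2) by blast
    qed
    then show "\<exists>n>0. \<forall>y. zres n y = zres n x \<longrightarrow> y \<in> S \<inter> T"
      using ab by blast
  qed
next
  fix K :: "zhat set set"
  assume K: "\<forall>S\<in>K. open S"
  show "open (\<Union>K)" unfolding open_zhat_def
  proof
    fix x assume "x \<in> \<Union>K"
    then obtain S where "S \<in> K" "x \<in> S" by blast
    then obtain n where "n > 0" "\<forall>y. zres n y = zres n x \<longrightarrow> y \<in> S"
      using K unfolding open_zhat_def by blast
    then show "\<exists>n>0. \<forall>y. zres n y = zres n x \<longrightarrow> y \<in> \<Union>K"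
      using \<open>S \<in> K\<close> by blast
  qed
qed

end

definition period_map :: "(nat \<Rightarrow> nat) \<Rightarrow> (zhat \<Rightarrow> zhat) \<Rightarrow> bool" where
  "period_map P g \<longleftrightarrow> (\<forall>n>0. P n > 0) \<and>
     (\<forall>s t n. n > 0 \<longrightarrow> zcong (P n) s t \<longrightarrow> zcong n (g s) (g t))"

definition congruence_preserving :: "(zhat \<Rightarrow> zhat) \<Rightarrow> bool" where
  "congruence_preserving f \<longleftrightarrow> continuous_on UNIV f \<and> period_map id f"

definition induced :: "(zhat \<Rightarrow> zhat) \<Rightarrow> nat \<Rightarrow> int \<Rightarrow> int" where
  "induced f n y = zres n (f (zemb (nat y)))"

definition cycle_length :: "(zhat \<Rightarrow> zhat) \<Rightarrow> nat \<Rightarrow> int \<Rightarrow> nat" where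
  "cycle_length f n y =
     (LEAST l. l \<ge> 1 \<and> (\<exists>k. (induced f n ^^ k) y = (induced f n ^^ (k + l)) y))"

definition lambda_f :: "(zhat \<Rightarrow> zhat) \<Rightarrow> nat \<Rightarrow> nat" where
  "lambda_f f n = Lcm (cycle_length f n ` {0..<int n})"

definition uparrow :: "(zhat \<Rightarrow> zhat) \<Rightarrow> zhat \<Rightarrow> zhat \<Rightarrow> zhat" where
  "uparrow f x s = (THE L. \<forall>ns :: nat \<Rightarrow> nat. (\<forall>i. ns i > 0) \<longrightarrow>
       filterlim ns at_top sequentially \<longrightarrow> (\<lambda>i. zemb (ns i)) \<longlonglongrightarrow> s \<longrightarrow>
       (\<lambda>i. (f ^^ ns i) x) \<longlonglongrightarrow> L)"

end

theory Submission
  imports Defs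
begin


lemma Rep_zhat_0: "Rep_zhat x 0 = 0" using Rep_zhat by blast

lemma zres_range: "0 < n \<Longrightarrow> 0 \<le> zres n x \<and> zres n x < int n"
  unfolding zres_def using Rep_zhat by blast

lemma zres_mod: "0 < m \<Longrightarrow> 0 < n \<Longrightarrow> m dvd n \<Longrightarrow> zres n x mod int m = zres m x"
  unfolding zres_def using Rep_zhat by blast

lemma zres_mod_self: "0 < n \<Longrightarrow> zres n x mod int n = zres n x"
  using zres_range by simp

lemma zhat_eqI: assumes "\<And>n. 0 < n \<Longrightarrow> zres n x = zres n y" shows "x = y"
proof -
  have "Rep_zhat x = Rep_zhat y"
  proof
    fix n show "Rep_zhat x n = Rep_zhat y n"
      using assms[of n] Rep_zhat_0[of x] Rep_zhat_0[of y] by (cases "n = 0") (auto simp: zres_def)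
  qed
  then show ?thesis by (simp add: Rep_zhat_inject)
qed

lemma mk_zhat:
  fixes g :: "nat \<Rightarrow> int"
  assumes "\<And>m n. 0 < m \<Longrightarrow> 0 < n \<Longrightarrow> m dvd n \<Longrightarrow> g n mod int m = g m mod int m"
  shows "Rep_zhat (Abs_zhat (\<lambda>k. if k = 0 then 0 else g k mod int k)) = (\<lambda>k. if k = 0 then 0 else g k mod int k)"
proof (rule Abs_zhat_inverse, unfold mem_Collect_eq, intro conjI allI impI)
  fix n :: nat assume "0 < n"
  then show "0 \<le> (if n = 0 then 0 else g n mod int n)" "(if n = 0 then 0 else g n mod int n) < int n"
    by simp_all
next
  fix m n :: nat assume mn: "0 < m" "0 < n" "m dvd n"
  have "int m dvd int n" using mn(3) by simp
  then have "g n mod int n mod int m = g n mod int m" by (rule mod_mod_cancel)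
  then show "(if n = 0 then 0 else g n mod int n) mod int m = (if m = 0 then 0 else g m mod int m)"
    using mn assms[OF mn] by simp
qed simp

lemma diff_compat:
  assumes "0 < m" "0 < n" "m dvd n"
  shows "(zres n a - zres n b) mod int m = (zres m a - zres m b) mod int m"
proof -
  have "(zres n a - zres n b) mod int m = (zres n a mod int m - zres n b mod int m) mod int m"
    by (simp only: mod_diff_eq)
  then show ?thesis by (simp only: zres_mod[OF assms])
qed

lemma mult_compat:
  assumes "0 < m" "0 < n" "m dvd n"
  shows "(zres n a * zres n b) mod int m = (zres m a * zres m b) mod int m"
proof -
  have "(zres n a * zres n b) mod int m = (zres n a mod int m * (zres n b mod int m)) mod int m"
    by (simp only: mod_mult_eq)
  then show ?thesis by (simp only: zres_mod[OF assms])
qed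

lemma zres_zsub: "0 < k \<Longrightarrow> zres k (zsub a b) = (zres k a - zres k b) mod int k"
  unfolding zsub_def zres_def
  apply (subst mk_zhat)
  subgoal for m n using diff_compat[of m n a b] unfolding zres_def by blast
  by simp

lemma zres_zmul: "0 < k \<Longrightarrow> zres k (zmul a b) = (zres k a * zres k b) mod int k"
  unfolding zmul_def zres_def
  apply (subst mk_zhat)
  subgoal for m n using mult_compat[of m n a b] unfolding zres_def by blast
  by simp

lemma zres_zemb: "0 < k \<Longrightarrow> zres k (zemb a) = int a mod int k"
  unfolding zemb_def zres_def
  apply (subst mk_zhat)
  subgoal for m n by (simp add: mod_mod_cancel)
  by simp

lemma zres_zemb': "0 < k \<Longrightarrow> zres k (zemb a) = int (a mod k)"
  by (simp add: zres_zemb zmod_int)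

lemma zcong_D: "0 < n \<Longrightarrow> zcong n a b \<Longrightarrow> zres n a = zres n b"
proof -
  assume n: "0 < n" and "zcong n a b"
  then obtain u where u: "zsub a b = zmul (zemb n) u" unfolding zcong_def by blast
  have "zres n (zsub a b) = zres n (zmul (zemb n) u)" using u by simp
  then have "(zres n a - zres n b) mod int n = (zres n (zemb n) * zres n u) mod int n"
    by (simp only: zres_zsub[OF n] zres_zmul[OF n])
  moreover have "zres n (zemb n) = 0" using zres_zemb'[OF n, of n] by simp
  ultimately have "(zres n a - zres n b) mod int n = 0" by (metis mult_zero_left mod_0)
  then show ?thesis using zres_range[OF n, of a] zres_range[OF n, of b]
    by (metis mod_eq_dvd_iff dvd_eq_mod_eq_0 mod_pos_pos_trivial)
qed

lemma zcong_I:
  assumes n: "0 < n" and eq: "zres n a = zres n b"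
  shows "zcong n a b"
proof -
  define d where "d k = zres (n*k) a - zres (n*k) b" for k
  define e where "e k = d k div int n" for k
  have dn: "d k = int n * e k" if "0 < k" for k
  proof -
    have "d k mod int n = (zres n a - zres n b) mod int n"
      unfolding d_def using zres_mod[of n "n*k"] n that by (metis dvd_triv_left mod_diff_eq nat_0_less_mult_iff)
    then have "int n dvd d k" using eq by (simp add: dvd_eq_mod_eq_0)
    then show ?thesis unfolding e_def by simp
  qed
  have ecomp: "e k mod int m = e m mod int m" if "0 < m" "0 < k" "m dvd k" for m k
  proof -
    have "d k mod int (n*m) = (zres (n*k) a mod int (n*m) - zres (n*k) b mod int (n*m)) mod int (n*m)"
      by (simp add: d_def mod_diff_eq)
    also have "\<dots> = d m mod int (n*m)"
      using zres_mod[of "n*m" "n*k" a] zres_mod[of "n*m" "n*k" b] n that by (simp add: d_def mult_dvd_mono)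
    finally have dd: "d k mod int (n*m) = d m mod int (n*m)" .
    have "int n * (e k mod int m) = (int n * e k) mod (int n * int m)" by (rule mult_mod_right)
    also have "\<dots> = d k mod int (n*m)" using dn[of k] that by simp
    also have "\<dots> = d m mod int (n*m)" by (rule dd)
    also have "\<dots> = (int n * e m) mod (int n * int m)" using dn[of m] that by simp
    also have "\<dots> = int n * (e m mod int m)" by (rule mult_mod_right[symmetric])
    finally have "int n * (e k mod int m) = int n * (e m mod int m)" .
    then show ?thesis using n by simp
  qed
  define u where "u = Abs_zhat (\<lambda>k. if k = 0 then 0 else e k mod int k)"
  have ru: "zres k u = e k mod int k" if "0 < k" for k
    unfolding u_def zres_def using that by (simp add: mk_zhat[of e, OF ecomp])
  have "zsub a b = zmul (zemb n) u"
  proof (rule zhat_eqI)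
    fix k :: nat assume k: "0 < k"
    have "zres k (zmul (zemb n) u) = (int n * e k) mod int k"
      using k by (simp only: zres_zmul zres_zemb ru mod_mult_eq)
    also have "\<dots> = d k mod int k" using dn k by simp
    also have "\<dots> = (zres k a - zres k b) mod int k"
    proof -
      have nk: "0 < n * k" using n k by simp
      have "d k mod int k = (zres (n*k) a mod int k - zres (n*k) b mod int k) mod int k"
        unfolding d_def by (simp add: mod_diff_eq)
      also have "\<dots> = (zres k a - zres k b) mod int k"
        using zres_mod[OF k nk, of a] zres_mod[OF k nk, of b] by simp
      finally show ?thesis .
    qed
    finally show "zres k (zsub a b) = zres k (zmul (zemb n) u)" using k by (simp add: zres_zsub)
  qed
  then show ?thesis unfolding zcong_def by blast
qed

lemma zcong_iff: "0 < n \<Longrightarrow> zcong n a b \<longleftrightarrow> zres n a = zres n b"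
  using zcong_D zcong_I by blast



lemma open_zres: "0 < n \<Longrightarrow> open {y. zres n y = c}"
  unfolding open_zhat_def by auto

lemma tendsto_zhat_iff:
  "(X \<longlongrightarrow> L) F \<longleftrightarrow> (\<forall>n>0. eventually (\<lambda>i. zres n (X i) = zres n L) F)"
proof
  assume "(X \<longlongrightarrow> L) F"
  then show "\<forall>n>0. eventually (\<lambda>i. zres n (X i) = zres n L) F"
    using topological_tendstoD[OF _ open_zres] by fastforce
next
  assume H: "\<forall>n>0. eventually (\<lambda>i. zres n (X i) = zres n L) F"
  show "(X \<longlongrightarrow> L) F"
  proof (rule topological_tendstoI)
    fix S assume "open S" "L \<in> S"
    then obtain n where n: "n > 0" "\<And>y. zres n y = zres n L \<Longrightarrow> y \<in> S"
      unfolding open_zhat_def by blast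
    have "eventually (\<lambda>i. zres n (X i) = zres n L) F" using H n(1) by blast
    then show "eventually (\<lambda>i. X i \<in> S) F"
      by (rule eventually_mono) (rule n(2))
  qed
qed

lemma ev_seq_ex: "eventually P sequentially \<Longrightarrow> \<exists>i. P i"
  by (auto simp: eventually_sequentially)

lemma lim_unique_zhat:
  fixes X :: "nat \<Rightarrow> zhat"
  assumes "X \<longlonglongrightarrow> L1" "X \<longlonglongrightarrow> L2" shows "L1 = L2"
proof (rule zhat_eqI)
  fix n :: nat assume n: "0 < n"
  have "eventually (\<lambda>i. zres n (X i) = zres n L1 \<and> zres n (X i) = zres n L2) sequentially"
    using assms n by (intro eventually_conj) (auto simp: tendsto_zhat_iff)
  then show "zres n L1 = zres n L2" using ev_seq_ex by fastforce
qed

lemma lim_exists_zhat: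
  fixes X :: "nat \<Rightarrow> zhat" and v :: "nat \<Rightarrow> int"
  assumes H: "\<And>n. 0 < n \<Longrightarrow> eventually (\<lambda>i. zres n (X i) = v n) sequentially"
  shows "\<exists>L. \<forall>n>0. zres n L = v n"
proof -
  have rng: "0 \<le> v k \<and> v k < int k" if "0 < k" for k
    using ev_seq_ex[OF H[OF that]] zres_range[OF that] by metis
  have cmp: "v n mod int m = v m" if mn: "0 < m" "0 < n" "m dvd n" for m n
  proof -
    obtain i where "zres n (X i) = v n \<and> zres m (X i) = v m"
      using ev_seq_ex[OF eventually_conj[OF H[OF mn(2)] H[OF mn(1)]]] by blast
    then show ?thesis using zres_mod[OF mn] by metis
  qed
  define g where "g = (\<lambda>k. if k = 0 then 0 else v k)"
  have "Rep_zhat (Abs_zhat g) = g"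
    by (rule Abs_zhat_inverse) (auto simp: g_def rng cmp)
  then have "\<forall>n>0. zres n (Abs_zhat g) = v n" by (simp add: zres_def g_def)
  then show ?thesis by blast
qed

lemma canon_seq:
  fixes t :: zhat
  shows "\<exists>c. (\<forall>i. c i > 0) \<and> filterlim c at_top sequentially \<and> (\<lambda>i. zemb (c i)) \<longlonglongrightarrow> t"
proof -
  define c where "c i = nat (zres (fact i) t) + fact i * (i + 1)" for i :: nat
  have fpos: "(0::nat) < fact i" for i by simp
  have ge: "i + 1 \<le> c i" for i
  proof -
    have "1 * (i + 1) \<le> fact i * (i + 1)" using fpos[of i] by (intro mult_right_mono) simp_all
    then have "i + 1 \<le> fact i * (i + 1)" by simp
    then show ?thesis unfolding c_def by linarith
  qed
  have "filterlim c at_top sequentially"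
    unfolding filterlim_at_top eventually_sequentially
  proof (intro allI exI[of _ Z for Z] impI)
    fix Z i :: nat assume "Z \<le> i" then show "Z \<le> c i" using ge[of i] by linarith
  qed
  moreover have "(\<lambda>i. zemb (c i)) \<longlonglongrightarrow> t"
    unfolding tendsto_zhat_iff
  proof (intro allI impI)
    fix n :: nat assume n: "0 < n"
    have "zres n (zemb (c i)) = zres n t" if "n \<le> i" for i
    proof -
      have d: "n dvd fact i" using n that by (simp add: dvd_fact)
      have "zres n (zemb (c i)) = int (c i) mod int n" using n by (simp add: zres_zemb)
      also have "\<dots> = (zres (fact i) t + int (fact i) * int (i+1)) mod int n"
      proof -
        have z: "int (nat (zres (fact i) t)) = zres (fact i) t"
          using zres_range[OF fpos[of i], of t] by (intro nat_0_le) blast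
        have "int (c i) = int (nat (zres (fact i) t)) + int (fact i * (i+1))"
          unfolding c_def by (rule of_nat_add)
        then have "int (c i) = zres (fact i) t + int (fact i) * int (i+1)"
          by (simp only: z of_nat_mult)
        then show ?thesis by (simp only:)
      qed
      also have "\<dots> = zres (fact i) t mod int n"
      proof -
        obtain q where q: "fact i = n * q" using d by (rule dvdE)
        have "int (fact i) * int (i+1) = int n * (int q * int (i+1))" unfolding q by simp
        then show ?thesis by (simp only: mod_mult_self2)
      qed
      also have "\<dots> = zres n t" using zres_mod[OF n fpos d] .
      finally show ?thesis .
    qed
    then show "eventually (\<lambda>i. zres n (zemb (c i)) = zres n t) sequentially"
      unfolding eventually_sequentially by blast
  qed
  moreover have "\<forall>i. c i > 0"
  proof
    fix i show "c i > 0" using ge[of i] by linarith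
  qed
  ultimately show ?thesis by blast
qed



lemma cp_step:
  assumes cp: "congruence_preserving f" and n: "0 < n" and eq: "zres n a = zres n b"
  shows "zres n (f a) = zres n (f b)"
proof -
  have "zcong (id n) a b" using zcong_I[OF n eq] by simp
  then have "zcong n (f a) (f b)" using cp n unfolding congruence_preserving_def period_map_def by blast
  then show ?thesis using zcong_D[OF n] by blast
qed

lemma zres_zemb_nat: "0 < n \<Longrightarrow> zres n (zemb (nat (zres n x))) = zres n x"
proof -
  assume n: "0 < n"
  have r: "0 \<le> zres n x" using zres_range[OF n] by blast
  have "zres n (zemb (nat (zres n x))) = int (nat (zres n x)) mod int n" by (rule zres_zemb[OF n])
  also have "int (nat (zres n x)) = zres n x" using r by (rule nat_0_le)
  also have "zres n x mod int n = zres n x" by (rule zres_mod_self[OF n])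
  finally show ?thesis .
qed

lemma induced_step:
  assumes cp: "congruence_preserving f" and n: "0 < n"
  shows "zres n (f x) = induced f n (zres n x)"
  unfolding induced_def by (rule cp_step[OF cp n]) (rule zres_zemb_nat[OF n, symmetric])

lemma iter_zres:
  assumes cp: "congruence_preserving f" and n: "0 < n"
  shows "zres n ((f^^k) x) = (induced f n ^^ k) (zres n x)"
proof (induction k)
  case 0 then show ?case by simp
next
  case (Suc k)
  have "zres n ((f^^Suc k) x) = zres n (f ((f^^k) x))" by simp
  also have "\<dots> = induced f n (zres n ((f^^k) x))" by (rule induced_step[OF cp n])
  also have "\<dots> = (induced f n ^^ Suc k) (zres n x)" using Suc by simp
  finally show ?case .
qed

lemma iter_range:
  assumes n: "0 < n" and y: "y \<in> {0..<int n}"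
  shows "(induced f n ^^ k) y \<in> {0..<int n}"
proof (cases k)
  case 0 then show ?thesis using y by simp
next
  case (Suc j)
  have "0 \<le> induced f n ((induced f n ^^ j) y) \<and> induced f n ((induced f n ^^ j) y) < int n"
    unfolding induced_def by (rule zres_range[OF n])
  then show ?thesis using Suc by simp
qed

lemma cycle_exists:
  assumes n: "0 < n" and y: "y \<in> {0..<int n}"
  shows "\<exists>l. l \<ge> 1 \<and> (\<exists>k. (induced f n ^^ k) y = (induced f n ^^ (k + l)) y)"
proof -
  let ?g = "\<lambda>i. (induced f n ^^ i) y"
  have "range ?g \<subseteq> {0..<int n}" using iter_range[OF n y] by blast
  then have "finite (range ?g)" using finite_subset by blast
  then have "\<not> inj ?g" using finite_imageD infinite_UNIV_nat by blast
  then obtain i j where ij: "i \<noteq> j" "?g i = ?g j" unfolding inj_def by blast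
  have *: "\<exists>l. l \<ge> 1 \<and> (\<exists>k. ?g k = ?g (k + l))" if "i < j" "?g i = ?g j" for i j
  proof (intro exI conjI)
    show "1 \<le> j - i" using that by simp
    show "?g i = ?g (i + (j - i))" using that by simp
  qed
  show ?thesis
  proof (cases "i < j")
    case True then show ?thesis using *[OF _ ij(2)] by blast
  next
    case False then have "j < i" using ij(1) by simp
    then show ?thesis using *[of j i] ij(2) by simp
  qed
qed

lemma cycle_length_prop:
  assumes n: "0 < n" and y: "y \<in> {0..<int n}"
  shows "cycle_length f n y \<ge> 1 \<and>
    (\<exists>k. (induced f n ^^ k) y = (induced f n ^^ (k + cycle_length f n y)) y)"
  unfolding cycle_length_def by (rule LeastI_ex) (rule cycle_exists[OF n y])

lemma lambda_pos:
  assumes n: "0 < n" shows "0 < lambda_f f n"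
proof -
  have "0 \<notin> cycle_length f n ` {0..<int n}"
  proof
    assume "0 \<in> cycle_length f n ` {0..<int n}"
    then obtain y where y: "y \<in> {0..<int n}" and y0: "0 = cycle_length f n y" by blast
    show False using cycle_length_prop[OF n y, of f] y0 by simp
  qed
  then have "lambda_f f n \<noteq> 0" unfolding lambda_f_def
    using Lcm_0_iff[of "cycle_length f n ` {0..<int n}"] by simp
  then show ?thesis by simp
qed

lemma funpow_period:
  fixes g :: "'a \<Rightarrow> 'a"
  assumes "(g^^k) y = (g^^(k+l)) y"
  shows "(g^^k) y = (g^^(k + m*l)) y"
proof (induction m)
  case 0 then show ?case by simp
next
  case (Suc m)
  have e1: "k + Suc m * l = m*l + (k+l)" by simp
  have e2: "k + m * l = m*l + k" by simp
  have "(g^^(k + Suc m * l)) y = (g^^(m*l)) ((g^^(k+l)) y)"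
    by (simp only: e1 funpow_add o_apply)
  also have "\<dots> = (g^^(m*l)) ((g^^k) y)" using assms by simp
  also have "\<dots> = (g^^(k + m*l)) y" by (simp only: e2 funpow_add o_apply)
  finally show ?case using Suc by simp
qed

lemma funpow_period2:
  fixes g :: "'a \<Rightarrow> 'a"
  assumes "(g^^k) y = (g^^(k+l)) y" "k \<le> a"
  shows "(g^^a) y = (g^^(a + m*l)) y"
proof -
  have e1: "a = (a-k) + k" using assms(2) by simp
  have e2: "a + m*l = (a-k) + (k + m*l)" using assms(2) by simp
  have "(g^^a) y = (g^^((a-k) + k)) y" using e1 by simp
  also have "\<dots> = (g^^(a-k)) ((g^^k) y)" by (simp only: funpow_add o_apply)
  also have "\<dots> = (g^^(a-k)) ((g^^(k + m*l)) y)" using funpow_period[OF assms(1)] by simp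
  also have "\<dots> = (g^^((a-k) + (k + m*l))) y" by (simp only: funpow_add o_apply)
  also have "\<dots> = (g^^(a + m*l)) y" using e2 by simp
  finally show ?thesis .
qed

lemma funpow_mod:
  fixes g :: "'a \<Rightarrow> 'a"
  assumes "(g^^k) y = (g^^(k+L)) y" "k \<le> a" "k \<le> b" "a mod L = b mod L"
  shows "(g^^a) y = (g^^b) y"
proof (cases "a \<le> b")
  case True
  obtain s where "b = a + L * s" using mod_eq_nat1E[OF assms(4)[symmetric] True] by blast
  then show ?thesis using funpow_period2[OF assms(1,2), of s] by (simp add: mult.commute)
next
  case False
  then have "b \<le> a" by simp
  obtain s where "a = b + L * s" using mod_eq_nat1E[OF assms(4) \<open>b \<le> a\<close>] by blast
  then show ?thesis using funpow_period2[OF assms(1,3), of s] by (simp add: mult.commute)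
qed

lemma periodic:
  assumes n: "0 < n" and y: "y \<in> {0..<int n}"
  shows "\<exists>k. (induced f n ^^ k) y = (induced f n ^^ (k + lambda_f f n)) y"
proof -
  obtain k where k: "(induced f n ^^ k) y = (induced f n ^^ (k + cycle_length f n y)) y"
    using cycle_length_prop[OF n y] by blast
  have "cycle_length f n y dvd lambda_f f n" unfolding lambda_f_def
    by (rule dvd_Lcm) (rule imageI[OF y])
  then obtain q where q: "lambda_f f n = q * cycle_length f n y" by (metis dvd_def mult.commute)
  show ?thesis using funpow_period[OF k, of q] q by auto
qed

lemma eventual_mod:
  assumes cp: "congruence_preserving f" and n: "0 < n"
  shows "\<exists>K. \<forall>a b. K \<le> a \<longrightarrow> K \<le> b \<longrightarrow> a mod lambda_f f n = b mod lambda_f f n \<longrightarrow>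
           zres n ((f^^a) x) = zres n ((f^^b) x)"
proof -
  have y: "zres n x \<in> {0..<int n}" using zres_range[OF n] by simp
  obtain k where k: "(induced f n ^^ k) (zres n x) = (induced f n ^^ (k + lambda_f f n)) (zres n x)"
    using periodic[OF n y] by blast
  show ?thesis
  proof (intro exI[of _ k] allI impI)
    fix a b assume ab: "k \<le> a" "k \<le> b" "a mod lambda_f f n = b mod lambda_f f n"
    have "(induced f n ^^ a) (zres n x) = (induced f n ^^ b) (zres n x)"
      using funpow_mod[OF k ab] .
    then show "zres n ((f^^a) x) = zres n ((f^^b) x)" by (simp only: iter_zres[OF cp n])
  qed
qed



theorem proposition3p9:
  fixes f :: "zhat \<Rightarrow> zhat" and s :: zhat
  assumes "congruence_preserving f"
  shows "period_map (lambda_f f) (uparrow f s)"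
proof -
  note cp = assms
  let ?L = "lambda_f f"
  have "\<forall>n. \<exists>K. 0 < n \<longrightarrow> (\<forall>a b. K \<le> a \<longrightarrow> K \<le> b \<longrightarrow> a mod ?L n = b mod ?L n \<longrightarrow>
          zres n ((f^^a) s) = zres n ((f^^b) s))"
    using eventual_mod[OF cp] by blast
  from choice[OF this] obtain K where K0: "\<forall>n. 0 < n \<longrightarrow> (\<forall>a b. K n \<le> a \<longrightarrow> K n \<le> b \<longrightarrow>
          a mod ?L n = b mod ?L n \<longrightarrow> zres n ((f^^a) s) = zres n ((f^^b) s))"
    by blast
  have K: "zres n ((f^^a) s) = zres n ((f^^b) s)"
    if "0 < n" "K n \<le> a" "K n \<le> b" "a mod ?L n = b mod ?L n" for n a b
    using K0 that by blast
  define a0 where "a0 t n = K n * ?L n + nat (zres (?L n) t)" for t n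
  have a0K: "K n \<le> a0 t n" if "0 < n" for t n
  proof -
    have "K n * 1 \<le> K n * ?L n" using lambda_pos[OF that, of f] by (intro mult_left_mono) simp_all
    then have "K n \<le> K n * ?L n" by simp
    then show ?thesis unfolding a0_def by linarith
  qed
  have a0mod: "int (a0 t n mod ?L n) = zres (?L n) t" if "0 < n" for t n
  proof -
    have Lp: "0 < ?L n" by (rule lambda_pos[OF that])
    have r: "0 \<le> zres (?L n) t" "zres (?L n) t < int (?L n)" using zres_range[OF Lp] by auto
    have "a0 t n mod ?L n = nat (zres (?L n) t) mod ?L n" unfolding a0_def by (simp only: mod_mult_self3)
    also have "\<dots> = nat (zres (?L n) t)"
    proof (rule mod_less)
      show "nat (zres (?L n) t) < ?L n" using r by (simp add: nat_less_iff)
    qed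
    finally show ?thesis using r(1) by simp
  qed
  have ev: "eventually (\<lambda>i. zres n ((f^^ns i) s) = zres n ((f^^a0 t n) s)) sequentially"
    if n: "0 < n" and lim: "filterlim ns at_top sequentially" and conv: "(\<lambda>i. zemb (ns i)) \<longlonglongrightarrow> t"
    for n ns t
  proof -
    have Lp: "0 < ?L n" by (rule lambda_pos[OF n])
    have e1: "eventually (\<lambda>i. zres (?L n) (zemb (ns i)) = zres (?L n) t) sequentially"
      using conv Lp unfolding tendsto_zhat_iff by blast
    have e2: "eventually (\<lambda>i. K n \<le> ns i) sequentially"
      using lim unfolding filterlim_at_top by blast
    show ?thesis
    proof (rule eventually_mono[OF eventually_conj[OF e1 e2]])
      fix i assume h: "zres (?L n) (zemb (ns i)) = zres (?L n) t \<and> K n \<le> ns i"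
      have "int (ns i mod ?L n) = zres (?L n) t" using h zres_zemb'[OF Lp, of "ns i"] by simp
      then have "int (ns i mod ?L n) = int (a0 t n mod ?L n)" using a0mod[OF n, of t] by simp
      then have "ns i mod ?L n = a0 t n mod ?L n" by (simp only: of_nat_eq_iff)
      then show "zres n ((f^^ns i) s) = zres n ((f^^a0 t n) s)" using K[OF n] h a0K[OF n] by blast
    qed
  qed
  have up: "zres n (uparrow f s t) = zres n ((f^^a0 t n) s)" if n: "0 < n" for n t
  proof -
    obtain c where c: "\<forall>i. c i > 0" "filterlim c at_top sequentially" "(\<lambda>i. zemb (c i)) \<longlonglongrightarrow> t"
      using canon_seq by blast
    have Hc: "eventually (\<lambda>i. zres m ((\<lambda>i. (f^^c i) s) i) = (\<lambda>m. zres m ((f^^a0 t m) s)) m) sequentially"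
      if "0 < m" for m
      using ev[OF that c(2,3)] by simp
    obtain L where L: "\<forall>m>0. zres m L = zres m ((f^^a0 t m) s)"
      using lim_exists_zhat[OF Hc] by blast
    have P: "(\<lambda>i. (f^^ns i) s) \<longlonglongrightarrow> L"
      if "filterlim ns at_top sequentially" "(\<lambda>i. zemb (ns i)) \<longlonglongrightarrow> t" for ns
      unfolding tendsto_zhat_iff
    proof (intro allI impI)
      fix m :: nat assume m: "0 < m"
      show "eventually (\<lambda>i. zres m ((f^^ns i) s) = zres m L) sequentially"
        using ev[OF m that] L m by simp
    qed
    have "uparrow f s t = L"
      unfolding uparrow_def
    proof (rule the_equality)
      show "\<forall>ns. (\<forall>i. ns i > 0) \<longrightarrow> filterlim ns at_top sequentially \<longrightarrow>
          (\<lambda>i. zemb (ns i)) \<longlonglongrightarrow> t \<longrightarrow> (\<lambda>i. (f^^ns i) s) \<longlonglongrightarrow> L"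
        using P by blast
    next
      fix L' assume "\<forall>ns. (\<forall>i. ns i > 0) \<longrightarrow> filterlim ns at_top sequentially \<longrightarrow>
          (\<lambda>i. zemb (ns i)) \<longlonglongrightarrow> t \<longrightarrow> (\<lambda>i. (f^^ns i) s) \<longlonglongrightarrow> L'"
      then have "(\<lambda>i. (f^^c i) s) \<longlonglongrightarrow> L'" using c by blast
      then show "L' = L" using lim_unique_zhat P[OF c(2,3)] by blast
    qed
    then show ?thesis using L n by simp
  qed
  show ?thesis
    unfolding period_map_def
  proof (intro conjI allI impI)
    fix n :: nat assume "0 < n" then show "0 < ?L n" by (rule lambda_pos)
  next
    fix t1 t2 n assume n: "0 < n" and cg: "zcong (?L n) t1 t2"
    have "zres (?L n) t1 = zres (?L n) t2" using zcong_D[OF lambda_pos[OF n] cg] .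
    then have "a0 t1 n = a0 t2 n" unfolding a0_def by simp
    then have "zres n (uparrow f s t1) = zres n (uparrow f s t2)" using up[OF n] by simp
    then show "zcong n (uparrow f s t1) (uparrow f s t2)" by (rule zcong_I[OF n])
  qed
qed

end
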